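(* Let $N$ be a finite set and $h,s:2^N\to\mathbb{R}$. Define the convolution $(h*s)_A=\sum_{X\subseteq N}h_Xs_{A\setminus X}$ for $A\subseteq N$, the transform $\widehat{s}^{(1)}_B=\sum_{A\subseteq N,\,A\cap B=\emptyset}s_A$, and the transform $\widehat{s}^{(3)}_B=\sum_{A\subseteq B}(-1)^{|A|}s_A$ for $B\subseteq N$. Then for every $B\subseteq N$, $$\widehat{(h*s)}^{(3)}_B=\widehat{h}^{(1)}_B\,\widehat{s}^{(3)}_B.$$ *)

theory Defs
  imports Complex_Main
begin

text \<open>Set functions on the power set of a ground set N, represented as functions
 'a set \<Rightarrow> real (only values on subsets of N matter).\<close>

definition setconv :: "'a set \<Rightarrow> ('a set \<Rightarrow> real) \<Rightarrow> ('a set \<Rightarrow> real) \<Rightarrow> 'a set \<Rightarrow> real" where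
  "setconv N h s A = (\<Sum>X\<in>Pow N. h X * s (A - X))"

definition transf1 :: "'a set \<Rightarrow> ('a set \<Rightarrow> real) \<Rightarrow> 'a set \<Rightarrow> real" where
  "transf1 N s B = (\<Sum>A\<in>{A. A \<subseteq> N \<and> A \<inter> B = {}}. s A)"

definition transf3 :: "('a set \<Rightarrow> real) \<Rightarrow> 'a set \<Rightarrow> real" where
  "transf3 s B = (\<Sum>A\<in>Pow B. (-1) ^ card A * s A)"

end

theory Submission
  imports Defs
begin

lemma key:
  fixes s :: "'a set \<Rightarrow> real"
  assumes "finite B"
  shows "(\<Sum>A\<in>Pow B. (-1) ^ card A * s (A - X)) = (if B \<inter> X = {} then transf3 s B else 0)"
proof (cases "B \<inter> X = {}")
  case True
  have "(\<Sum>A\<in>Pow B. (-1) ^ card A * s (A - X)) = (\<Sum>A\<in>Pow B. (-1) ^ card A * s A)"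
    proof (rule sum.cong)
    fix A assume "A \<in> Pow B"
    then have "A - X = A" using True by blast
    then show "(-1) ^ card A * s (A - X) = (-1) ^ card A * s A" by simp
  qed simp
  then show ?thesis using True by (simp add: transf3_def)
next
  case False
  then obtain x where x: "x \<in> B" "x \<in> X" by blast
  define C where "C = B - {x}"
  have B: "B = insert x C" and xC: "x \<notin> C" and fC: "finite C" using x assms by (auto simp: C_def)
  have P: "Pow B = Pow C \<union> insert x ` Pow C" unfolding B by (rule Pow_insert)
  have disj: "Pow C \<inter> insert x ` Pow C = {}" using xC by auto
  have inj: "inj_on (insert x) (Pow C)" unfolding inj_on_def using xC by (metis PowD insert_ident subsetD)
  have "(\<Sum>A\<in>insert x ` Pow C. (-1) ^ card A * s (A - X))
      = (\<Sum>A\<in>Pow C. (-1) ^ card (insert x A) * s (insert x A - X))"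
    by (rule sum.reindex[OF inj, unfolded comp_def])
  also have "\<dots> = (\<Sum>A\<in>Pow C. - ((-1) ^ card A * s (A - X)))"
  proof (rule sum.cong)
    fix A assume "A \<in> Pow C"
    then have "finite A" "x \<notin> A" using fC xC finite_subset by auto
    moreover have "insert x A - X = A - X" using x by auto
    ultimately show "(-1) ^ card (insert x A) * s (insert x A - X) = - ((-1) ^ card A * s (A - X))"
      by simp
  qed simp
  finally have "(\<Sum>A\<in>Pow B. (-1) ^ card A * s (A - X)) = 0"
    unfolding P using fC disj by (simp add: sum.union_disjoint sum_negf)
  then show ?thesis using False by simp
qed

theorem mainTheorem8:
  fixes N :: "'a set" and h s :: "'a set \<Rightarrow> real" and B :: "'a set"
  assumes "finite N" and "B \<subseteq> N"
  shows "transf3 (setconv N h s) B = transf1 N h B * transf3 s B"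
proof -
  have fB: "finite B" using assms finite_subset by auto
  have "transf3 (setconv N h s) B = (\<Sum>A\<in>Pow B. \<Sum>X\<in>Pow N. (-1) ^ card A * (h X * s (A - X)))"
    by (simp add: transf3_def setconv_def sum_distrib_left)
  also have "\<dots> = (\<Sum>X\<in>Pow N. h X * (\<Sum>A\<in>Pow B. (-1) ^ card A * s (A - X)))"
    by (subst sum.swap) (simp add: sum_distrib_left mult.left_commute)
  also have "\<dots> = (\<Sum>X\<in>Pow N. if X \<inter> B = {} then h X * transf3 s B else 0)"
    by (rule sum.cong) (auto simp: key[OF fB] Int_commute)
  also have "\<dots> = (\<Sum>X\<in>{X. X \<subseteq> N \<and> X \<inter> B = {}}. h X * transf3 s B)"
  proof -
    have "{X. X \<subseteq> N \<and> X \<inter> B = {}} = {X \<in> Pow N. X \<inter> B = {}}" by auto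
    then show ?thesis using sum.inter_filter[of "Pow N" "\<lambda>X. h X * transf3 s B" "\<lambda>X. X \<inter> B = {}"] assms(1)
      by simp
  qed
  also have "\<dots> = transf1 N h B * transf3 s B"
    by (simp add: transf1_def sum_distrib_right)
  finally show ?thesis .
qed

end
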